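(* There is a universal constant $C$ such that for every positive integer $s$, every integer $k$ with $0<k<s/2$, and every $x\in\mathbb{R}$, $$|\Phi(y_k)-\Phi(y_k^* )|\le \frac{C}{\sqrt{s}}\big(1+t_k^2\big),$$ where $\Phi$ is the standard normal distribution function.
   Context: For a positive integer $s$, let $X_s$ be the size of an $(s,s+1)$-core with distinct parts chosen uniformly at random (a partition is an $s$-core if no cell of its Ferrers diagram has hook length $s$, where the hook length of a cell is the number of cells strictly to its right plus the number strictly above it plus one; an $(s,s+1)$-core is simultaneously an $s$-core and an $(s+1)$-core; the size is the sum of the parts). Let $\mu$ and $\sigma^2$ be the mean and variance of $X_s$. For integers $0<k<s/2$ put $\mu_k=\tfrac12 k(s+1-k)$ and $\sigma_k^2=\tfrac1{12}k(s+1-k)(s-2k)$ with $\sigma_k>0$, and for $x\in\mathbb{R}$ put $y_k=\frac{1}{\sigma_k}\big((\mu-\mu_k)+x\sigma\big)$. Let $c_0=(5-\sqrt5)/10$, $k_0=\lfloor c_0 s\rfloor$, $t_k=5^{3/4}(k-k_0)/\sqrt{s}$, $a=\sqrt{8/5}$, $b=-\sqrt{3/5}$, and $y_k^*=ax+bt_k$. *)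

theory Defs
  imports "HOL-Probability.Probability"
begin

text \<open>A partition with distinct parts is represented by the finite set P of its parts
(positive naturals). The cells of its Ferrers diagram are the pairs (p, j) with p in P and
1 <= j <= p (row of length p, column j). The hook length of cell (p, j) is
(cells to its right: p - j) + (cells above it in column j, i.e. rows of smaller length q
with j <= q) + 1.\<close>

definition hook_length :: "nat set \<Rightarrow> nat \<Rightarrow> nat \<Rightarrow> nat" where
  "hook_length P p j = (p - j) + card {q \<in> P. j \<le> q \<and> q < p} + 1"

definition is_core :: "nat \<Rightarrow> nat set \<Rightarrow> bool" where
  "is_core t P \<longleftrightarrow> (\<forall>p\<in>P. \<forall>j\<in>{1..p}. hook_length P p j \<noteq> t)"

definition distinct_cores :: "nat \<Rightarrow> nat set set" where
  "distinct_cores s = {P. finite P \<and> 0 \<notin> P \<and> is_core s P \<and> is_core (s + 1) P}"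

definition part_size :: "nat set \<Rightarrow> real" where
  "part_size P = real (\<Sum>P)"

definition core_mean :: "nat \<Rightarrow> real" where
  "core_mean s = (\<Sum>P\<in>distinct_cores s. part_size P) / real (card (distinct_cores s))"

definition core_var :: "nat \<Rightarrow> real" where
  "core_var s = (\<Sum>P\<in>distinct_cores s. (part_size P - core_mean s)\<^sup>2) / real (card (distinct_cores s))"

definition Phi :: "real \<Rightarrow> real" where
  "Phi y = measure (density lborel std_normal_density) {..y}"

definition mu_k :: "nat \<Rightarrow> nat \<Rightarrow> real" where
  "mu_k s k = real k * (real s + 1 - real k) / 2"

definition sigma_k :: "nat \<Rightarrow> nat \<Rightarrow> real" where
  "sigma_k s k = sqrt (real k * (real s + 1 - real k) * (real s - 2 * real k) / 12)"

definition y_k :: "nat \<Rightarrow> nat \<Rightarrow> real \<Rightarrow> real" where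
  "y_k s k x = ((core_mean s - mu_k s k) + x * sqrt (core_var s)) / sigma_k s k"

definition c0 :: real where "c0 = (5 - sqrt 5) / 10"

definition k0 :: "nat \<Rightarrow> int" where "k0 s = \<lfloor>c0 * real s\<rfloor>"

definition t_k :: "nat \<Rightarrow> nat \<Rightarrow> real" where
  "t_k s k = 5 powr (3/4) * (real k - real_of_int (k0 s)) / sqrt (real s)"

definition y_k_star :: "nat \<Rightarrow> nat \<Rightarrow> real \<Rightarrow> real" where
  "y_k_star s k x = sqrt (8/5) * x + (- sqrt (3/5)) * t_k s k"

end

theory Submission
  imports Defs
begin


definition DD :: "nat \<Rightarrow> nat set set" where
  "DD s = {P. finite P \<and> 0 \<notin> P \<and> (\<forall>p\<in>P. p + card P \<le> s)}"

lemma hook_le: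
  assumes "finite P" "p \<in> P" "1 \<le> j" "j \<le> p"
  shows "hook_length P p j + 1 \<le> p + card P"
proof -
  have "{q \<in> P. j \<le> q \<and> q < p} \<subseteq> P - {p}" by auto
  hence "card {q \<in> P. j \<le> q \<and> q < p} \<le> card (P - {p})"
    using assms by (intro card_mono) auto
  also have "\<dots> = card P - 1" using assms by simp
  finally have "card {q \<in> P. j \<le> q \<and> q < p} \<le> card P - 1" .
  moreover have "card P \<ge> 1" using assms by (metis One_nat_def Suc_leI card_gt_0_iff empty_iff)
  ultimately show ?thesis using assms unfolding hook_length_def by linarith
qed

lemma discrete_ivt:
  fixes f :: "nat \<Rightarrow> nat"
  shows "s \<le> f a \<Longrightarrow> f (a + d) \<le> s + 1 \<Longrightarrow> (\<forall>j. a \<le> j \<and> j < a + d \<longrightarrow> f j \<le> f (Suc j) + 2)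
    \<Longrightarrow> \<exists>j. a \<le> j \<and> j \<le> a + d \<and> (f j = s \<or> f j = s + 1)"
proof (induction d arbitrary: a)
  case 0
  then show ?case by force
next
  case (Suc d)
  show ?case
  proof (cases "f a = s \<or> f a = s + 1")
    case True
    then show ?thesis by force
  next
    case False
    hence "f a \<ge> s + 2" using Suc.prems(1) by linarith
    moreover have "f a \<le> f (Suc a) + 2" using Suc.prems(3) by auto
    ultimately have "s \<le> f (Suc a)" by linarith
    from Suc.IH[of "Suc a"] this Suc.prems(2,3)
    obtain j where "Suc a \<le> j \<and> j \<le> Suc a + d \<and> (f j = s \<or> f j = s + 1)" by auto
    thus ?thesis by (intro exI[of _ j]) auto
  qed
qed

lemma cores_iff:
  assumes "finite P" "0 \<notin> P"
  shows "(is_core s P \<and> is_core (s+1) P) \<longleftrightarrow> (\<forall>p\<in>P. p + card P \<le> s)"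
proof
  assume R: "\<forall>p\<in>P. p + card P \<le> s"
  have "hook_length P p j < s" if "p \<in> P" "j \<in> {1..p}" for p j
    using hook_le[OF assms(1) that(1), of j] R that by fastforce
  thus "is_core s P \<and> is_core (s+1) P" unfolding is_core_def by fastforce
next
  assume C: "is_core s P \<and> is_core (s+1) P"
  show "\<forall>p\<in>P. p + card P \<le> s"
  proof (cases "P = {}")
    case True then show ?thesis by simp
  next
    case ne: False
    define m where "m = Max P"
    have mP: "m \<in> P" using ne assms m_def by simp
    have m1: "m \<ge> 1" using mP assms(2) by (cases m) auto
    have pm: "p \<le> m" if "p \<in> P" for p using that assms m_def by simp
    define h where "h j = hook_length P m j" for j
    have "\<not> (m + card P \<ge> s + 1)"
    proof
      assume big: "m + card P \<ge> s + 1"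
      have "{q \<in> P. 1 \<le> q \<and> q < m} = P - {m}"
        using assms(2) pm mP by (auto simp: Suc_le_eq intro: le_neq_implies_less)
      hence "card {q \<in> P. 1 \<le> q \<and> q < m} = card P - 1" using assms mP by simp
      moreover have "card P \<ge> 1" using ne assms(1) by (simp add: Suc_leI card_gt_0_iff)
      ultimately have h1: "h 1 = m + card P - 1" unfolding h_def hook_length_def
        using m1 by simp
      have hm: "h m = 1" unfolding h_def hook_length_def by simp
      have step: "h j \<le> h (Suc j) + 2" if "1 \<le> j" "j < m" for j
      proof -
        have "{q \<in> P. j \<le> q \<and> q < m} \<subseteq> insert j {q \<in> P. Suc j \<le> q \<and> q < m}" by auto
        hence "card {q \<in> P. j \<le> q \<and> q < m} \<le> card (insert j {q \<in> P. Suc j \<le> q \<and> q < m})"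
          using assms(1) by (intro card_mono) auto
        also have "\<dots> \<le> Suc (card {q \<in> P. Suc j \<le> q \<and> q < m})" by (simp add: card_insert_le_m1)
        finally show ?thesis unfolding h_def hook_length_def using that by linarith
      qed
      have "\<exists>j. 1 \<le> j \<and> j \<le> 1 + (m - 1) \<and> (h j = s \<or> h j = s + 1)"
        by (rule discrete_ivt) (use h1 hm big m1 step in auto)
      then obtain j where j: "1 \<le> j" "j \<le> m" "h j = s \<or> h j = s + 1" using m1 by auto
      thus False using C mP unfolding is_core_def h_def by force
    qed
    thus ?thesis using pm by fastforce
  qed
qed

lemma distinct_cores_DD: "distinct_cores s = DD s"
  unfolding distinct_cores_def DD_def using cores_iff by blast




lemma DD_sub: "DD s \<subseteq> Pow {1..s}"
proof
  fix P assume "P \<in> DD s"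
  hence "finite P" "0 \<notin> P" "\<forall>p\<in>P. p + card P \<le> s" unfolding DD_def by auto
  hence "p \<in> {1..s}" if "p \<in> P" for p using that by (cases p) force+
  thus "P \<in> Pow {1..s}" by auto
qed

lemma finite_DD: "finite (DD s)"
  using DD_sub by (rule finite_subset) auto

lemma DD_0: "DD 0 = {{}}"
proof -
  have "P = {}" if "P \<in> DD 0" for P
  proof (rule ccontr)
    assume "P \<noteq> {}" then obtain p where "p \<in> P" by auto
    have "0 \<notin> P" "p + card P \<le> 0" using that \<open>p \<in> P\<close> unfolding DD_def by auto
    thus False using \<open>p \<in> P\<close> by simp
  qed
  thus ?thesis unfolding DD_def by auto
qed

lemma DD_1: "DD 1 = {{}}"
proof -
  have "P = {}" if "P \<in> DD 1" for P
  proof (rule ccontr)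
    assume ne: "P \<noteq> {}" then obtain p where p: "p \<in> P" by auto
    have "finite P" "0 \<notin> P" "p + card P \<le> 1" using that p unfolding DD_def by auto
    moreover have "card P \<ge> 1" using ne \<open>finite P\<close> by (simp add: Suc_leI card_gt_0_iff)
    ultimately show False using p by (cases p) auto
  qed
  thus ?thesis unfolding DD_def by auto
qed

definition shiftS :: "nat set \<Rightarrow> nat set" where "shiftS Q = Suc ` Q"
definition addone :: "nat set \<Rightarrow> nat set" where "addone Q = insert 1 (Suc ` Q)"

lemma card_shiftS: "card (shiftS Q) = card Q"
  unfolding shiftS_def by (simp add: card_image)

lemma sum_shiftS: "finite Q \<Longrightarrow> \<Sum>(shiftS Q) = \<Sum>Q + card Q"
proof -
  assume "finite Q"
  have "\<Sum>(shiftS Q) = (\<Sum>q\<in>Q. q + 1)" unfolding shiftS_def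
    by (rule sum.reindex_cong[of Suc]) auto
  also have "\<dots> = (\<Sum>q\<in>Q. q) + (\<Sum>q\<in>Q. 1)" by (rule sum.distrib)
  also have "\<dots> = \<Sum>Q + card Q" by simp
  finally show ?thesis .
qed

lemma one_notin: "0 \<notin> Q \<Longrightarrow> 1 \<notin> Suc ` Q" by auto

lemma card_addone: "finite Q \<Longrightarrow> 0 \<notin> Q \<Longrightarrow> card (addone Q) = card Q + 1"
  unfolding addone_def by (subst card_insert_disjoint) (auto simp: card_image)

lemma sum_addone: "finite Q \<Longrightarrow> 0 \<notin> Q \<Longrightarrow> \<Sum>(addone Q) = \<Sum>Q + card Q + 1"
proof -
  assume Q: "finite Q" "0 \<notin> Q"
  have "\<Sum>(addone Q) = 1 + \<Sum>(shiftS Q)" unfolding addone_def shiftS_def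
    by (subst sum.insert) (use Q in auto)
  thus ?thesis using sum_shiftS[OF Q(1)] by simp
qed

lemma inj_shiftS: "inj shiftS"
  unfolding shiftS_def by (meson injI inj_Suc inj_image_eq_iff)

lemma inj_addone: "inj_on addone {Q. 0 \<notin> Q}"
proof (rule inj_onI)
  fix A B assume A: "A \<in> {Q. 0 \<notin> Q}" and B: "B \<in> {Q. 0 \<notin> Q}" and eq: "addone A = addone B"
  have r: "addone X - {1} = Suc ` X" if "0 \<notin> X" for X using that unfolding addone_def by auto
  have "Suc ` A = addone A - {1}" using r[of A] A by simp
  also have "\<dots> = addone B - {1}" using eq by simp
  also have "\<dots> = Suc ` B" using r[of B] B by simp
  finally have "Suc ` A = Suc ` B" .
  thus "A = B" by (simp add: inj_image_eq_iff)
qed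

lemma DD_rec: "DD (s + 2) = shiftS ` DD (s + 1) \<union> addone ` DD s"
proof (intro equalityI subsetI)
  fix P assume "P \<in> shiftS ` DD (s + 1) \<union> addone ` DD s"
  then consider (a) Q where "Q \<in> DD (s+1)" "P = shiftS Q" | (b) Q where "Q \<in> DD s" "P = addone Q" by blast
  thus "P \<in> DD (s + 2)"
  proof cases
    case a
    hence "finite Q" "0 \<notin> Q" "\<forall>p\<in>Q. p + card Q \<le> s + 1" unfolding DD_def by auto
    thus ?thesis using a card_shiftS[of Q] unfolding DD_def shiftS_def by auto
  next
    case b
    hence Q: "finite Q" "0 \<notin> Q" "\<forall>p\<in>Q. p + card Q \<le> s" unfolding DD_def by auto
    have cQ: "card Q \<le> s"
    proof (cases "Q = {}")
      case False then obtain p where "p \<in> Q" by auto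
      thus ?thesis using Q by fastforce
    qed simp
    show ?thesis using b Q cQ card_addone[OF Q(1,2)] unfolding DD_def addone_def by auto
  qed
next
  fix P assume "P \<in> DD (s + 2)"
  hence P: "finite P" "0 \<notin> P" "\<forall>p\<in>P. p + card P \<le> s + 2" unfolding DD_def by auto
  show "P \<in> shiftS ` DD (s + 1) \<union> addone ` DD s"
  proof (cases "1 \<in> P")
    case False
    define Q where "Q = (\<lambda>p. p - 1) ` P"
    have ge2: "p \<ge> 2" if "p \<in> P" for p using that P(2) False by (cases p; cases "p - 1") auto
    have PQ: "P = shiftS Q" unfolding Q_def shiftS_def image_image
    proof -
      have "(\<lambda>x. Suc (x - 1)) ` P = id ` P" proof (intro image_cong)
        fix x assume "x \<in> P" thus "Suc (x - 1) = id x" using ge2[of x] by simp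
      qed simp
      thus "P = (\<lambda>x. Suc (x - 1)) ` P" by simp
    qed
    have "finite Q" unfolding Q_def using P by auto
    moreover have "0 \<notin> Q" unfolding Q_def using ge2 by force
    moreover have "card Q = card P" using PQ card_shiftS by simp
    moreover have "\<forall>q\<in>Q. q + card Q \<le> s + 1"
    proof
      fix q assume "q \<in> Q" then obtain p where "p \<in> P" "q = p - 1" unfolding Q_def by auto
      thus "q + card Q \<le> s + 1" using P(3) ge2[of p] \<open>card Q = card P\<close> by fastforce
    qed
    ultimately have "Q \<in> DD (s + 1)" unfolding DD_def by auto
    thus ?thesis using PQ by auto
  next
    case True
    define Q where "Q = (\<lambda>p. p - 1) ` (P - {1})"
    have ge2: "p \<ge> 2" if "p \<in> P - {1}" for p using that P(2) by (cases p; cases "p - 1") auto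
    have PQ: "P = addone Q" unfolding Q_def addone_def image_image
    proof -
      have "(\<lambda>x. Suc (x - 1)) ` (P - {1}) = id ` (P - {1})" proof (intro image_cong)
        fix x assume "x \<in> P - {1}" thus "Suc (x - 1) = id x" using ge2[of x] by simp
      qed simp
      thus "P = insert 1 ((\<lambda>x. Suc (x - 1)) ` (P - {1}))" using True by auto
    qed
    have "finite Q" unfolding Q_def using P by auto
    moreover have "0 \<notin> Q" unfolding Q_def using ge2 by force
    moreover have "card P = card Q + 1" using PQ card_addone \<open>finite Q\<close> \<open>0 \<notin> Q\<close> by simp
    moreover have "\<forall>q\<in>Q. q + card Q \<le> s"
    proof
      fix q assume "q \<in> Q" then obtain p where "p \<in> P - {1}" "q = p - 1" unfolding Q_def by auto
      thus "q + card Q \<le> s" using P(3) ge2[of p] \<open>card P = card Q + 1\<close> by fastforce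
    qed
    ultimately have "Q \<in> DD s" unfolding DD_def by auto
    thus ?thesis using PQ by auto
  qed
qed

lemma DD_fin: "P \<in> DD s \<Longrightarrow> finite P \<and> 0 \<notin> P" unfolding DD_def by auto

lemma DD_disj: "shiftS ` DD (s + 1) \<inter> addone ` DD s = {}"
proof -
  have "1 \<notin> shiftS Q" if "Q \<in> DD (s+1)" for Q using that DD_fin[of Q] unfolding shiftS_def by auto
  moreover have "1 \<in> addone Q" for Q unfolding addone_def by auto
  ultimately show ?thesis by blast
qed


lemma sum_DD_rec:
  fixes g :: "nat \<Rightarrow> nat \<Rightarrow> real"
  shows "(\<Sum>P\<in>DD (s+2). g (\<Sum>P) (card P)) =
     (\<Sum>Q\<in>DD (s+1). g (\<Sum>Q + card Q) (card Q)) + (\<Sum>Q\<in>DD s. g (\<Sum>Q + card Q + 1) (card Q + 1))"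
proof -
  have "(\<Sum>P\<in>DD (s+2). g (\<Sum>P) (card P)) =
     (\<Sum>P\<in>shiftS ` DD (s + 1). g (\<Sum>P) (card P)) + (\<Sum>P\<in>addone ` DD s. g (\<Sum>P) (card P))"
    unfolding DD_rec by (rule sum.union_disjoint) (use finite_DD DD_disj in auto)
  also have "(\<Sum>P\<in>shiftS ` DD (s + 1). g (\<Sum>P) (card P)) = (\<Sum>Q\<in>DD (s+1). g (\<Sum>Q + card Q) (card Q))"
    by (subst sum.reindex) (auto intro: inj_on_subset[OF inj_shiftS] simp: sum_shiftS card_shiftS DD_fin)
  also have "(\<Sum>P\<in>addone ` DD s. g (\<Sum>P) (card P)) = (\<Sum>Q\<in>DD s. g (\<Sum>Q + card Q + 1) (card Q + 1))"
    by (subst sum.reindex) (auto intro: inj_on_subset[OF inj_addone] DD_fin simp: sum_addone card_addone DD_fin)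
  finally show ?thesis .
qed




definition St :: "(real \<Rightarrow> real \<Rightarrow> real) \<Rightarrow> nat \<Rightarrow> real" where
  "St g s = (\<Sum>P\<in>DD s. g (real (\<Sum>P)) (real (card P)))"

lemma St_rec: "St g (Suc (Suc s)) = St (\<lambda>x c. g (x + c) c) (Suc s) + St (\<lambda>x c. g (x + c + 1) (c + 1)) s"
  using sum_DD_rec[of "\<lambda>a b. g (real a) (real b)" s] unfolding St_def by (simp add: add.commute)

lemma St_0: "St g 0 = g 0 0" unfolding St_def DD_0 by simp
lemma St_1: "St g (Suc 0) = g 0 0" using DD_1 unfolding St_def by simp

lemma St_add: "St (\<lambda>x c. f x c + g x c) s = St f s + St g s"
  unfolding St_def by (simp add: sum.distrib)
lemma St_mult: "St (\<lambda>x c. a * f x c) s = a * St f s"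
  unfolding St_def by (simp add: sum_distrib_left)

abbreviation "NN \<equiv> St (\<lambda>x c. 1)"
abbreviation "CC1 \<equiv> St (\<lambda>x c. c)"
abbreviation "XX1 \<equiv> St (\<lambda>x c. x)"
abbreviation "CC2 \<equiv> St (\<lambda>x c. c * c)"
abbreviation "XC2 \<equiv> St (\<lambda>x c. x * c)"
abbreviation "XX2 \<equiv> St (\<lambda>x c. x * x)"

lemma St_cong: "(\<And>x c. f x c = g x c) \<Longrightarrow> St f s = St g s" unfolding St_def by simp

lemma rec_N: "NN (Suc (Suc s)) = NN (Suc s) + NN s" by (simp add: St_rec)
lemma rec_C: "CC1 (Suc (Suc s)) = CC1 (Suc s) + CC1 s + NN s"
  by (simp add: St_rec St_add)
lemma rec_X: "XX1 (Suc (Suc s)) = XX1 (Suc s) + CC1 (Suc s) + XX1 s + CC1 s + NN s"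
  by (simp add: St_rec St_add)
lemma rec_CC: "CC2 (Suc (Suc s)) = CC2 (Suc s) + CC2 s + 2 * CC1 s + NN s"
proof -
  have "CC2 (Suc (Suc s)) = CC2 (Suc s) + St (\<lambda>x c. c * c + 2 * c + 1) s"
    by (simp add: St_rec algebra_simps)
  thus ?thesis by (simp add: St_add St_mult)
qed
lemma rec_XC: "XC2 (Suc (Suc s)) = XC2 (Suc s) + CC2 (Suc s) + XC2 s + CC2 s + XX1 s + 2 * CC1 s + NN s"
proof -
  have "XC2 (Suc (Suc s)) = St (\<lambda>x c. x * c + c * c) (Suc s) + St (\<lambda>x c. x * c + c * c + x + 2 * c + 1) s"
    by (simp add: St_rec algebra_simps)
  thus ?thesis by (simp add: St_add St_mult)
qed
lemma rec_XX: "XX2 (Suc (Suc s)) = XX2 (Suc s) + 2 * XC2 (Suc s) + CC2 (Suc s) + XX2 s + 2 * XC2 s + CC2 s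
   + 2 * XX1 s + 2 * CC1 s + NN s"
proof -
  have "XX2 (Suc (Suc s)) = St (\<lambda>x c. x * x + 2 * (x * c) + c * c) (s+1)
      + St (\<lambda>x c. x * x + 2 * (x * c) + c * c + 2 * x + 2 * c + 1) s"
    by (simp add: St_rec algebra_simps)
  thus ?thesis by (simp add: St_add St_mult)
qed

fun F :: "nat \<Rightarrow> real" where
  "F 0 = 0" | "F (Suc 0) = 1" | "F (Suc (Suc n)) = F (Suc n) + F n"

lemma F2: "F (Suc (Suc s)) = F (Suc s) + F s" by simp
lemma F3: "F (s+3) = 2 * F (Suc s) + F s" by (simp add: numeral_3_eq_3)

definition cfN :: "nat \<Rightarrow> real" where "cfN s = F (s+1)"
definition cfC :: "nat \<Rightarrow> real" where "cfC s = (-1/5 - (real s)/5) * F s + (2*(real s)/5) * F (s+1)"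
definition cfX :: "nat \<Rightarrow> real" where
  "cfX s = (-3/25 - 3*(real s)/25) * F s + (7*(real s)/50 + (real s)^2/10) * F (s+1)"
definition cfCC :: "nat \<Rightarrow> real" where
  "cfCC s = (1/25 - 4*(real s)/25 - (real s)^2/5) * F s + (3*(real s)/25 + (real s)^2/5) * F (s+1)"
definition cfXC :: "nat \<Rightarrow> real" where
  "cfXC s = (- (real s)/10 - 3*(real s)^2/25 - (real s)^3/50) * F s + ((real s)/10 + (real s)^2/10 + (real s)^3/25) * F (s+1)"
definition cfXX :: "nat \<Rightarrow> real" where
  "cfXX s = (-3/125 - 19*(real s)/375 - (real s)^2/25 - (real s)^3/75) * F s + (13*(real s)/375 + (real s)^2/20 + (real s)^3/30 + (real s)^4/100) * F (s+1)"

definition good :: "nat \<Rightarrow> bool" where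
  "good s \<longleftrightarrow> NN s = cfN s \<and> CC1 s = cfC s \<and> XX1 s = cfX s \<and> CC2 s = cfCC s \<and> XC2 s = cfXC s
     \<and> XX2 s = cfXX s"

lemma good01: "good 0" "good 1"
  by (simp_all add: good_def St_0 St_1 cfN_def cfC_def cfX_def cfCC_def cfXC_def cfXX_def)

lemma good_step:
  assumes "good s" "good (Suc s)" shows "good (Suc (Suc s))"
proof -
  from assms have e1: "NN s = cfN s" "CC1 s = cfC s" "XX1 s = cfX s" "CC2 s = cfCC s" "XC2 s = cfXC s"
     "XX2 s = cfXX s" unfolding good_def by blast+
  from assms have e2: "NN (Suc s) = cfN (Suc s)" "CC1 (Suc s) = cfC (Suc s)" "XX1 (Suc s) = cfX (Suc s)"
     "CC2 (Suc s) = cfCC (Suc s)" "XC2 (Suc s) = cfXC (Suc s)"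
     "XX2 (Suc s) = cfXX (Suc s)" unfolding good_def by blast+
  have FF: "F (Suc (Suc s)) = F (Suc s) + F s" "F (Suc (Suc (Suc s))) = 2 * F (Suc s) + F s" by simp_all
  have sN: "NN (Suc (Suc s)) = cfN (Suc (Suc s))" unfolding rec_N e1 e2 cfN_def by simp
  have sC: "CC1 (Suc (Suc s)) = cfC (Suc (Suc s))" unfolding rec_C e1 e2 cfN_def cfC_def
    by (simp only: Suc_eq_plus1[symmetric] FF of_nat_Suc) (simp add: field_simps)
  have sX: "XX1 (Suc (Suc s)) = cfX (Suc (Suc s))" unfolding rec_X e1 e2 cfN_def cfC_def cfX_def
    by (simp only: Suc_eq_plus1[symmetric] FF of_nat_Suc) (simp add: field_simps power2_eq_square)
  have sCC: "CC2 (Suc (Suc s)) = cfCC (Suc (Suc s))" unfolding rec_CC e1 e2 cfN_def cfC_def cfCC_def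
    by (simp only: Suc_eq_plus1[symmetric] FF of_nat_Suc) (simp add: field_simps power2_eq_square)
  have sXC: "XC2 (Suc (Suc s)) = cfXC (Suc (Suc s))" unfolding rec_XC e1 e2 cfN_def cfC_def cfX_def cfCC_def cfXC_def
    by (simp only: Suc_eq_plus1[symmetric] FF of_nat_Suc) (simp add: field_simps power2_eq_square power3_eq_cube)
  have sXX: "XX2 (Suc (Suc s)) = cfXX (Suc (Suc s))" unfolding rec_XX e1 e2 cfN_def cfC_def cfX_def cfCC_def cfXC_def cfXX_def
    by (simp only: Suc_eq_plus1[symmetric] FF of_nat_Suc) (simp add: field_simps power2_eq_square power3_eq_cube power4_eq_xxxx)
  show ?thesis unfolding good_def using sN sC sX sCC sXC sXX by blast
qed

lemma good_all: "good s"
proof (induction s rule: nat_less_induct)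
  case (1 n)
  show ?case
  proof (cases n)
    case 0 thus ?thesis using good01 by simp
  next
    case (Suc m) note m = this
    show ?thesis
    proof (cases m)
      case 0 thus ?thesis using good01 m by simp
    next
      case (Suc k) thus ?thesis using good_step 1 m by simp
    qed
  qed
qed




lemma F_nonneg: "F n \<ge> 0 \<and> F (Suc n) \<ge> 1 \<and> F n \<le> F (Suc n)"
  by (induction n rule: F.induct) auto

lemma F_ge: "F (Suc n) \<ge> real n \<and> F (Suc (Suc n)) \<ge> real n + 1"
proof (induction n)
  case 0 then show ?case by simp
next
  case (Suc n)
  have "F (Suc (Suc (Suc n))) = F (Suc (Suc n)) + F (Suc n)" by simp
  moreover have "F (Suc n) \<ge> 1" using F_nonneg by blast
  ultimately show ?case using Suc by simp
qed

definition phi :: real where "phi = (1 + sqrt 5) / 2"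
definition psi :: real where "psi = (1 - sqrt 5) / 2"

lemma sqrt5_bounds: "2.236 < sqrt 5" "sqrt 5 < 2.2361"
proof -
  have "(2.236::real)^2 < 5" by (simp add: power2_eq_square)
  hence "sqrt ((2.236::real)^2) < sqrt 5" by (rule real_sqrt_less_mono)
  thus "2.236 < sqrt 5" by simp
  have "5 < (2.2361::real)^2" by (simp add: power2_eq_square)
  hence "sqrt 5 < sqrt ((2.2361::real)^2)" by (rule real_sqrt_less_mono)
  thus "sqrt 5 < 2.2361" by simp
qed

lemma sq5: "sqrt 5 * sqrt 5 = (5::real)" by simp

lemma F_binet: "F (Suc n) - phi * F n = psi ^ n"
proof (induction n rule: nat_less_induct)
  case (1 n)
  show ?case
  proof (cases n)
    case 0 then show ?thesis by simp
  next
    case (Suc m)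
    have "F (Suc (Suc m)) - phi * F (Suc m) = (1 - phi) * F (Suc m) + F m" by (simp add: algebra_simps)
    also have "\<dots> = psi * (F (Suc m) - phi * F m)"
      unfolding phi_def psi_def by (simp add: algebra_simps sq5 field_simps)
    also have "\<dots> = psi ^ Suc m" using 1 Suc by simp
    finally show ?thesis using Suc by simp
  qed
qed

definition rho :: "nat \<Rightarrow> real" where "rho s = F s / F (Suc s)"
definition rhostar :: real where "rhostar = (sqrt 5 - 1) / 2"

lemma rho_01: "0 \<le> rho s \<and> rho s \<le> 1"
  using F_nonneg[of s] unfolding rho_def by (auto simp: divide_le_eq_1)

lemma rho_close: "\<bar>rho s - rhostar\<bar> \<le> 1 / F (Suc s)"
proof -
  have Fp: "F (Suc s) > 0" using F_nonneg[of s] by simp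
  have pp: "phi * rhostar = 1" unfolding phi_def rhostar_def by (simp add: algebra_simps sq5 field_simps)
  have ph: "phi \<ge> 1" unfolding phi_def using sqrt5_bounds by simp
  have "rho s - rhostar = (phi * F s - F (Suc s)) / (phi * F (Suc s))"
    unfolding rho_def using Fp ph pp by (simp add: field_simps)
  also have "\<dots> = - (psi ^ s) / (phi * F (Suc s))" using F_binet[of s] by (simp add: algebra_simps)
  finally have e: "\<bar>rho s - rhostar\<bar> = \<bar>psi\<bar> ^ s / (phi * F (Suc s))" using Fp ph by (simp add: abs_mult power_abs)
  have "\<bar>psi\<bar> \<le> 1" unfolding psi_def using sqrt5_bounds by simp
  hence "\<bar>psi\<bar> ^ s \<le> 1" by (simp add: power_le_one)
  hence "\<bar>psi\<bar> ^ s / (phi * F (Suc s)) \<le> 1 / (phi * F (Suc s))" using Fp ph by (simp add: divide_right_mono)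
  also have "\<dots> \<le> 1 / F (Suc s)" using Fp ph by (simp add: field_simps)
  finally show ?thesis using e by simp
qed

lemma rho_close2: "s \<ge> 1 \<Longrightarrow> \<bar>rho s - rhostar\<bar> \<le> 1 / real s"
proof -
  assume "s \<ge> 1"
  hence "1 / F (Suc s) \<le> 1 / real s" using F_ge[of s] by (intro divide_left_mono) auto
  thus ?thesis using rho_close[of s] by linarith
qed

lemma card_DD: "real (card (DD s)) = NN s" unfolding St_def by simp
lemma sumsize_DD: "(\<Sum>P\<in>DD s. part_size P) = XX1 s" unfolding St_def part_size_def by simp

lemma mean_eq: "core_mean s = (-3/25 - 3*real s/25) * rho s + 7*real s/50 + (real s)^2/10"
proof -
  have Fp: "F (Suc s) > 0" using F_nonneg[of s] by simp
  have "core_mean s = cfX s / F (Suc s)"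
    unfolding core_mean_def distinct_cores_DD card_DD sumsize_DD using good_all[of s]
    by (simp add: good_def cfN_def)
  thus ?thesis unfolding cfX_def rho_def using Fp by (simp add: field_simps)
qed

lemma var_eq0: "core_var s = XX2 s / F (Suc s) - (core_mean s)^2"
proof -
  have Fp: "F (Suc s) > 0" using F_nonneg[of s] by simp
  define \<mu> where "\<mu> = core_mean s"
  have N: "real (card (DD s)) = F (Suc s)" using good_all[of s] card_DD by (simp add: good_def cfN_def)
  have X: "(\<Sum>P\<in>DD s. part_size P) = \<mu> * F (Suc s)" unfolding \<mu>_def core_mean_def distinct_cores_DD N
    using Fp by simp
  have "(\<Sum>P\<in>DD s. (part_size P - \<mu>)\<^sup>2) = (\<Sum>P\<in>DD s. (part_size P)^2) - 2 * \<mu> * (\<Sum>P\<in>DD s. part_size P)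
      + \<mu>^2 * real (card (DD s))"
    by (simp add: power2_diff sum.distrib sum_subtractf sum_distrib_left algebra_simps)
  also have "(\<Sum>P\<in>DD s. (part_size P)^2) = XX2 s" unfolding St_def part_size_def by (simp add: power2_eq_square)
  finally have "(\<Sum>P\<in>DD s. (part_size P - \<mu>)\<^sup>2) = XX2 s - \<mu>^2 * F (Suc s)" unfolding X N
    by (simp add: power2_eq_square)
  thus ?thesis unfolding core_var_def distinct_cores_DD N \<mu>_def[symmetric] using Fp
    by (simp add: field_simps)
qed

lemma var_eq: "core_var s = (2 + 4 * rho s) * (real s)^3 / 375
   + (-3/125 * rho s - 9/625 * (rho s)^2 + 13/375 * real s - 32/1875 * (real s * rho s)
      - 18/625 * (real s * (rho s)^2) + 19/625 * (real s)^2 + 11/625 * ((real s)^2 * rho s)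
      - 9/625 * ((real s)^2 * (rho s)^2))"
proof -
  have Fp: "F (Suc s) > 0" using F_nonneg[of s] by simp
  have hY: "XX2 s / F (Suc s) = (-3/125 - 19*real s/375 - (real s)^2/25 - (real s)^3/75) * rho s
     + (13*real s/375 + (real s)^2/20 + (real s)^3/30 + (real s)^4/100)"
    using good_all[of s] Fp unfolding good_def cfXX_def rho_def by (simp add: field_simps)
  show ?thesis unfolding var_eq0 mean_eq hY
    by (simp add: algebra_simps power2_eq_square power3_eq_cube power4_eq_xxxx)
qed

lemma lin_R: fixes r q a b c d S T :: real
  assumes "0 \<le> r" "r \<le> 1" "0 \<le> q" "q \<le> 1" "0 \<le> a" "a \<le> T" "0 \<le> b" "b \<le> T"
   "0 \<le> c" "c \<le> T" "0 \<le> d" "d \<le> T" "S \<le> T" "1 \<le> T" "0 \<le> S"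
  shows "\<bar>-3/125 * r - 9/625 * q + 13/375 * S - 32/1875 * a - 18/625 * b + 19/625 * T + 11/625 * c - 9/625 * d\<bar> \<le> T"
  using assms by (simp add: abs_le_iff)

lemma lin_M: fixes r a S :: real
  assumes "0 \<le> r" "r \<le> 1" "0 \<le> a" "a \<le> S" "1 \<le> S"
  shows "\<bar>-3/25 * r - 3/25 * a + 7/50 * S\<bar> \<le> S"
  using assms by (simp add: abs_le_iff)

lemma mean_bound: "s \<ge> 1 \<Longrightarrow> \<bar>core_mean s - (real s)^2/10\<bar> \<le> real s"
proof -
  assume s: "s \<ge> 1"
  have r: "0 \<le> rho s" "rho s \<le> 1" using rho_01 by auto
  have "0 \<le> real s * rho s" using r by simp
  moreover have "real s * rho s \<le> real s * 1" using r by (intro mult_left_mono) auto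
  ultimately have "0 \<le> real s * rho s" "real s * rho s \<le> real s" by auto
  moreover have "real s \<ge> 1" using s by simp
  ultimately have "\<bar>-3/25 * rho s - 3/25 * (real s * rho s) + 7/50 * real s\<bar> \<le> real s"
    using r by (intro lin_M) auto
  moreover have "core_mean s - (real s)^2/10 = -3/25 * rho s - 3/25 * (real s * rho s) + 7/50 * real s"
    unfolding mean_eq by (simp add: algebra_simps)
  ultimately show ?thesis by simp
qed

definition vv :: real where "vv = 2 * sqrt 5 / 375"

lemma var_bound: "s \<ge> 1 \<Longrightarrow> \<bar>core_var s - vv * (real s)^3\<bar> \<le> 2 * (real s)^2"
proof -
  assume s1: "s \<ge> 1"
  define S where "S = real s"
  define r where "r = rho s"
  have S: "S \<ge> 1" using s1 unfolding S_def by simp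
  have r: "0 \<le> r" "r \<le> 1" using rho_01 unfolding r_def by auto
  have r2: "0 \<le> r^2" "r^2 \<le> 1" using r by (auto simp: power_le_one)
  have m1: "0 \<le> S * r" "S * r \<le> S^2" using r S by (auto simp: power2_eq_square intro: mult_left_mono)
  have m2: "0 \<le> S * r^2" "S * r^2 \<le> S^2" using r2 S by (auto simp: power2_eq_square[of S] intro: mult_left_mono)
  have m3: "0 \<le> S^2 * r" "S^2 * r \<le> S^2" using r S by (auto intro: mult_left_le)
  have m4: "0 \<le> S^2 * r^2" "S^2 * r^2 \<le> S^2" using r2 S by (auto intro: mult_left_le)
  have m5: "S \<le> S^2" using S by (auto simp: power2_eq_square)
  hence m6: "1 \<le> S^2" using S by linarith
  define R where "R = (-3/125 * r - 9/625 * r^2 + 13/375 * S - 32/1875 * (S * r)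
      - 18/625 * (S * r^2) + 19/625 * S^2 + 11/625 * (S^2 * r) - 9/625 * (S^2 * r^2))"
  have Rb: "\<bar>R\<bar> \<le> S^2" unfolding R_def using r r2 m1 m2 m3 m4 m5 m6 S by (intro lin_R) auto
  have cv: "core_var s = (2 + 4 * r) * S^3 / 375 + R" unfolding R_def r_def S_def by (rule var_eq)
  have "2 + 4 * rhostar = 2 * sqrt 5" unfolding rhostar_def by (simp add: field_simps)
  hence vv': "vv = (2 + 4 * rhostar) / 375" unfolding vv_def by simp
  have "core_var s - vv * S^3 = 4 * (r - rhostar) * S^3 / 375 + R" unfolding cv vv'
    by (simp add: field_simps)
  moreover have "\<bar>4 * (r - rhostar) * S^3 / 375\<bar> \<le> 4 * S^2 / 375"
  proof -
    have "\<bar>r - rhostar\<bar> \<le> 1 / S" using rho_close2[OF s1] unfolding r_def S_def .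
    hence "\<bar>r - rhostar\<bar> * S^3 \<le> (1 / S) * S^3" using S by (intro mult_right_mono) auto
    also have "(1 / S) * S^3 = S^2" using S by (simp add: power2_eq_square power3_eq_cube)
    finally have "\<bar>r - rhostar\<bar> * S^3 \<le> S^2" .
    moreover have "\<bar>4 * (r - rhostar) * S^3 / 375\<bar> = 4 * (\<bar>r - rhostar\<bar> * S^3) / 375"
      unfolding abs_divide abs_mult using S by simp
    ultimately show ?thesis by simp
  qed
  ultimately show ?thesis using Rb unfolding S_def[symmetric] by linarith
qed




abbreviation "NM \<equiv> density lborel std_normal_density"

lemma NM_prob: "prob_space NM" by (rule prob_space_normal_density) simp

lemma Phi_01: "0 \<le> Phi y \<and> Phi y \<le> 1"
proof -
  interpret prob_space NM by (rule NM_prob)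
  show ?thesis unfolding Phi_def by simp
qed

lemma Phi_diff:
  assumes "a \<le> b" "K \<ge> 0" "\<And>x. a < x \<Longrightarrow> x \<le> b \<Longrightarrow> std_normal_density x \<le> K"
  shows "0 \<le> Phi b - Phi a \<and> Phi b - Phi a \<le> K * (b - a)"
proof -
  interpret prob_space NM by (rule NM_prob)
  have U: "{..b} = {..a} \<union> {a<..b}" using assms(1) by auto
  have "Phi b = Phi a + measure NM {a<..b}" unfolding Phi_def U
    by (rule finite_measure_Union) auto
  moreover have "emeasure NM {a<..b} \<le> ennreal (K * (b - a))"
  proof -
    have "emeasure NM {a<..b} = (\<integral>\<^sup>+x. ennreal (std_normal_density x) * indicator {a<..b} x \<partial>lborel)"
      by (subst emeasure_density) auto
    also have "\<dots> \<le> (\<integral>\<^sup>+x. ennreal K * indicator {a<..b} x \<partial>lborel)"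
      by (intro nn_integral_mono) (auto simp: indicator_def assms(3) intro!: ennreal_leI)
    also have "\<dots> = ennreal K * emeasure lborel {a<..b}"
      by (rule nn_integral_cmult_indicator) auto
    also have "\<dots> = ennreal (K * (b - a))" using assms(1,2) by (simp add: ennreal_mult)
    finally show ?thesis .
  qed
  hence "measure NM {a<..b} \<le> K * (b - a)"
    using assms by (simp add: emeasure_eq_measure mult_nonneg_nonneg)
  ultimately show ?thesis by simp
qed

lemma snd_le: "std_normal_density x \<le> 1"
proof -
  have "exp (- x\<^sup>2 / 2) \<le> 1" by simp
  moreover have "1 / sqrt (2 * pi) \<le> 1" using pi_gt3 by (simp add: real_le_rsqrt)
  ultimately show ?thesis unfolding std_normal_density_def
    by (metis exp_ge_zero mult_le_one zero_le_divide_1_iff real_sqrt_ge_zero zero_le_mult_iff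
        mult_nonneg_nonneg less_eq_real_def pi_gt_zero)
qed

lemma Phi_lip: "\<bar>Phi u - Phi v\<bar> \<le> \<bar>u - v\<bar>"
proof (cases "v \<le> u")
  case True
  from Phi_diff[OF True, of 1] snd_le show ?thesis by auto
next
  case False
  hence "u \<le> v" by simp
  from Phi_diff[OF this, of 1] snd_le show ?thesis by auto
qed

lemma xexp_le: "\<bar>z\<bar> * exp (- z\<^sup>2 / 2) \<le> (1::real)"
proof -
  have "1 + z\<^sup>2 / 2 \<le> exp (z\<^sup>2 / 2)" by (rule exp_ge_add_one_self_aux) simp
  moreover have "\<bar>z\<bar> \<le> 1 + z\<^sup>2 / 2"
  proof -
    have "0 \<le> (\<bar>z\<bar> - 1)\<^sup>2" by simp
    thus ?thesis by (simp add: power2_eq_square algebra_simps abs_mult_self_eq)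
  qed
  ultimately have "\<bar>z\<bar> \<le> exp (z\<^sup>2 / 2)" by linarith
  hence "\<bar>z\<bar> * exp (- z\<^sup>2 / 2) \<le> exp (z\<^sup>2 / 2) * exp (- z\<^sup>2 / 2)"
    by (intro mult_right_mono) auto
  also have "\<dots> = 1" by (simp add: exp_add[symmetric])
  finally show ?thesis .
qed

lemma snd_mono: "x\<^sup>2 \<ge> y\<^sup>2 \<Longrightarrow> std_normal_density x \<le> std_normal_density y"
  unfolding std_normal_density_def by (intro mult_left_mono) auto

lemma Phi_scale:
  assumes r: "r > 0"
  shows "\<bar>Phi (r * u) - Phi u\<bar> \<le> \<bar>r - 1\<bar> / min r 1"
proof -
  define m where "m = min r 1"
  have m: "0 < m" "m \<le> 1" "m \<le> r" using r by (auto simp: m_def)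
  define K where "K = std_normal_density (m * u)"
  have K0: "K \<ge> 0" unfolding K_def by simp
  have bnd: "std_normal_density x \<le> K" if "min u (r*u) \<le> x" "x \<le> max u (r*u)" for x
  proof -
    have "(m * u)\<^sup>2 \<le> x\<^sup>2"
    proof (cases "u \<ge> 0")
      case True
      have "m * u \<le> 1 * u" using m True by (intro mult_right_mono) auto
      moreover have "m * u \<le> r * u" using m True by (intro mult_right_mono) auto
      ultimately have "m * u \<le> min u (r * u)" by auto
      hence "0 \<le> m * u" "m * u \<le> x" using that m True by auto
      thus ?thesis by (simp add: power_mono)
    next
      case False
      have "1 * u \<le> m * u" using m False by (intro mult_right_mono_neg) auto
      moreover have "r * u \<le> m * u" using m False by (intro mult_right_mono_neg) auto
      ultimately have "max u (r * u) \<le> m * u" by auto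
      hence x: "x \<le> m * u" using that(2) by linarith
      have "m * u \<le> 0" using m False by (intro mult_nonneg_nonpos) auto
      note this x
      hence "(-(m * u)) \<le> -x" "0 \<le> -(m*u)" by auto
      hence "(-(m * u))\<^sup>2 \<le> (-x)\<^sup>2" by (rule power_mono)
      thus ?thesis by simp
    qed
    thus ?thesis unfolding K_def by (rule snd_mono)
  qed
  have "\<bar>Phi (r * u) - Phi u\<bar> \<le> K * \<bar>r * u - u\<bar>"
  proof (cases "u \<le> r * u")
    case True
    from Phi_diff[OF True K0] bnd True show ?thesis by auto
  next
    case False
    hence "r * u \<le> u" by simp
    from Phi_diff[OF this K0] bnd False show ?thesis by auto
  qed
  also have "K * \<bar>r * u - u\<bar> = \<bar>r - 1\<bar> * (\<bar>u\<bar> * K)"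
  proof -
    have "r * u - u = (r - 1) * u" by (simp add: algebra_simps)
    hence "\<bar>r * u - u\<bar> = \<bar>r - 1\<bar> * \<bar>u\<bar>" by (simp add: abs_mult)
    thus ?thesis by (simp add: mult_ac)
  qed
  also have "\<bar>u\<bar> * K \<le> 1 / m"
  proof -
    have h1: "\<bar>m * u\<bar> * exp (- (m*u)\<^sup>2 / 2) \<le> 1" by (rule xexp_le)
    have h2: "1 / sqrt (2 * pi) \<le> 1" using pi_gt3 by (simp add: real_le_rsqrt)
    have "(1 / sqrt (2 * pi)) * (\<bar>m * u\<bar> * exp (- (m*u)\<^sup>2 / 2)) \<le> 1"
      using mult_le_one[OF h2 _ h1] by simp
    hence "\<bar>m * u\<bar> * K \<le> 1" unfolding K_def std_normal_density_def by (simp add: mult_ac)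
    hence "m * (\<bar>u\<bar> * K) \<le> 1" using m by (simp add: abs_mult)
    thus ?thesis using m by (simp add: field_simps)
  qed
  hence "\<bar>r - 1\<bar> * (\<bar>u\<bar> * K) \<le> \<bar>r - 1\<bar> * (1 / m)" by (intro mult_left_mono) auto
  finally show ?thesis unfolding m_def by simp
qed

lemma Phi_compare:
  assumes "A > 0" "a > 0"
  shows "\<bar>Phi (A * x + B) - Phi (a * x + \<beta>)\<bar>
     \<le> \<bar>B - \<beta>\<bar> + \<bar>A / a - 1\<bar> * \<bar>\<beta>\<bar> + \<bar>A / a - 1\<bar> / min (A / a) 1"
proof -
  define r where "r = A / a"
  define u where "u = a * x + \<beta>"
  have r0: "r > 0" using assms by (simp add: r_def)
  have e: "A * x + B = r * u + (B - r * \<beta>)" unfolding r_def u_def using assms by (simp add: field_simps)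
  have "\<bar>Phi (r * u + (B - r * \<beta>)) - Phi (r * u)\<bar> \<le> \<bar>B - r * \<beta>\<bar>"
    using Phi_lip[of "r * u + (B - r * \<beta>)" "r * u"] by simp
  also have "\<bar>B - r * \<beta>\<bar> \<le> \<bar>B - \<beta>\<bar> + \<bar>r - 1\<bar> * \<bar>\<beta>\<bar>"
  proof -
    have "B - r * \<beta> = (B - \<beta>) - (r - 1) * \<beta>" by (simp add: algebra_simps)
    thus ?thesis by (metis abs_mult abs_triangle_ineq4)
  qed
  finally have 1: "\<bar>Phi (r * u + (B - r * \<beta>)) - Phi (r * u)\<bar> \<le> \<bar>B - \<beta>\<bar> + \<bar>r - 1\<bar> * \<bar>\<beta>\<bar>" .
  have 2: "\<bar>Phi (r * u) - Phi u\<bar> \<le> \<bar>r - 1\<bar> / min r 1" by (rule Phi_scale[OF r0])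
  show ?thesis unfolding e u_def[symmetric] r_def[symmetric] using 1 2 by linarith
qed




lemma c0_facts: "c0 * (1 - c0) = 1/5" "1 - 2 * c0 = sqrt 5 / 5"
  unfolding c0_def by (simp_all add: field_simps sq5 algebra_simps)

lemma W_ident:
  fixes p S e :: real
  assumes "p * (1 - p) = 1/5"
  shows "(p*S + e) * (S - (p*S + e)) * (S - 2 * (p*S + e)) =
     (1 - 2*p)/5 * S^3 - 1/5 * S^2 * e - 3 * (1 - 2*p) * S * e^2 + 2 * e^3"
  using assms by algebra

definition gam :: real where "gam = sqrt 5 / 300"
definition lam :: real where "lam = sqrt 5 / 10"

lemma gam_pos: "gam > 0" unfolding gam_def by simp
lemma lam_pos: "lam > 0" unfolding lam_def by simp

lemma abs4: fixes a b c d :: real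
  shows "\<bar>a\<bar> \<le> A \<Longrightarrow> \<bar>b\<bar> \<le> B \<Longrightarrow> \<bar>c\<bar> \<le> C \<Longrightarrow> \<bar>d\<bar> \<le> D \<Longrightarrow> \<bar>a + b + c + d\<bar> \<le> A + B + C + D"
  by (simp add: abs_le_iff)

lemma W_close:
  fixes S kk :: real
  assumes S: "S \<ge> 1" and k: "0 \<le> kk" "kk \<le> S/2" and eS: "\<bar>kk - c0*S\<bar> \<le> S"
  shows "\<bar>kk*(S+1-kk)*(S-2*kk)/12 - gam*S^3\<bar> \<le> (\<bar>kk - c0*S\<bar> + 1) * S^2 / 3"
proof -
  define e where "e = kk - c0*S"
  define w where "w = 1 - 2 * c0"
  have kk: "kk = c0*S + e" unfolding e_def by simp
  have w: "w = sqrt 5 / 5" unfolding w_def using c0_facts by simp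
  have w0: "0 \<le> w" "w \<le> 1/2" unfolding w using sqrt5_bounds by auto
  have s1: "kk*(S+1-kk)*(S-2*kk) = kk*(S-kk)*(S-2*kk) + kk*(S-2*kk)" by algebra
  have id: "kk*(S-kk)*(S-2*kk) = w/5 * S^3 - 1/5 * S^2 * e - 3 * w * S * e^2 + 2 * e^3"
    unfolding kk w_def by (rule W_ident[OF c0_facts(1)])
  have g: "w/5/12 = gam" unfolding w gam_def by simp
  have eq: "kk*(S+1-kk)*(S-2*kk)/12 - gam*S^3 =
      ((-1/5) * (S^2 * e) + (-3 * w) * (S * e^2) + 2 * e^3 + kk*(S-2*kk)) / 12"
    unfolding s1 id g[symmetric] by (simp add: field_simps)
  have eS': "\<bar>e\<bar> \<le> S" using eS unfolding e_def .
  have b1: "\<bar>(-1/5) * (S^2 * e)\<bar> \<le> 1/5 * (S^2 * \<bar>e\<bar>)" using S by (simp add: abs_mult)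
  have "\<bar>S * e^2\<bar> = \<bar>e\<bar> * (S * \<bar>e\<bar>)" using S by (simp add: abs_mult power2_eq_square)
  also have "\<dots> \<le> \<bar>e\<bar> * (S * S)" using S eS' by (intro mult_left_mono) auto
  finally have "\<bar>S * e^2\<bar> \<le> S^2 * \<bar>e\<bar>" by (simp add: power2_eq_square mult_ac)
  hence "3 * w * \<bar>S * e^2\<bar> \<le> (3 * (1/2)) * (S^2 * \<bar>e\<bar>)"
    using mult_mono[of "3*w" "3*(1/2)" "\<bar>S*e^2\<bar>" "S^2*\<bar>e\<bar>"] w0 by auto
  moreover have "\<bar>(-3 * w) * (S * e^2)\<bar> = 3 * w * \<bar>S * e^2\<bar>" using w0 by (simp add: abs_mult)
  ultimately have b2: "\<bar>(-3 * w) * (S * e^2)\<bar> \<le> 3/2 * (S^2 * \<bar>e\<bar>)" by simp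
  have "\<bar>e^3\<bar> = \<bar>e\<bar> * (\<bar>e\<bar> * \<bar>e\<bar>)" by (simp add: power3_eq_cube abs_mult)
  also have "\<dots> \<le> \<bar>e\<bar> * (S * S)" using eS' by (intro mult_left_mono mult_mono) auto
  finally have b3: "\<bar>2 * e^3\<bar> \<le> 2 * (S^2 * \<bar>e\<bar>)" by (simp add: power2_eq_square mult_ac)
  have "0 \<le> kk*(S-2*kk)" using k by simp
  moreover have "kk*(S-2*kk) \<le> S * S" using k S by (intro mult_mono) auto
  ultimately have b4: "\<bar>kk*(S-2*kk)\<bar> \<le> S^2" by (simp add: power2_eq_square)
  have "\<bar>(-1/5) * (S^2 * e) + (-3 * w) * (S * e^2) + 2 * e^3 + kk*(S-2*kk)\<bar>
      \<le> 1/5 * (S^2 * \<bar>e\<bar>) + 3/2 * (S^2 * \<bar>e\<bar>) + 2 * (S^2 * \<bar>e\<bar>) + S^2"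
    by (rule abs4[OF b1 b2 b3 b4])
  also have "\<dots> \<le> 4 * ((\<bar>e\<bar> + 1) * S^2)" by (simp add: algebra_simps)
  finally show ?thesis unfolding eq e_def[symmetric] by simp
qed

lemma theta: "sqrt (3/5) * 5 powr (3/4) = lam / sqrt gam"
proof -
  have p: "5 powr (3/4) * 5 powr (3/4) = 5 * sqrt (5::real)"
  proof -
    have "5 powr (3/4) * 5 powr (3/4) = (5::real) powr (3/4 + 3/4)" by (rule powr_add[symmetric])
    also have "(3/4 + 3/4) = (1::real) + 1/2" by simp
    also have "(5::real) powr (1 + 1/2) = 5 powr 1 * 5 powr (1/2)" by (rule powr_add)
    also have "\<dots> = 5 * sqrt 5" by (simp add: powr_half_sqrt)
    finally show ?thesis .
  qed
  have l: "(sqrt (3/5) * 5 powr (3/4))^2 = 3 * sqrt 5"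
    by (simp add: power2_eq_square mult_ac) (simp add: p[unfolded mult.assoc] mult.assoc[symmetric])
  have r: "(lam / sqrt gam)^2 = 3 * sqrt 5" unfolding lam_def gam_def
    by (simp add: power2_eq_square field_simps sq5)
  have "0 \<le> sqrt (3/5) * 5 powr (3/4)" by simp
  moreover have "0 \<le> lam / sqrt gam" using lam_pos gam_pos by simp
  ultimately show ?thesis using l r by (metis power2_eq_imp_eq)
qed

lemma vv_gam: "vv * (5/8) = gam" unfolding vv_def gam_def by simp

lemma mean_split:
  fixes S kk :: real
  shows "kk*(S+1-kk)/2 = S^2/10 + lam * S * (kk - c0*S) - (kk - c0*S)^2/2 + kk/2"
proof -
  define e where "e = kk - c0*S"
  have kk: "kk = c0*S + e" unfolding e_def by simp
  have "kk*(S-kk) = c0*(1-c0)*S^2 + (1 - 2*c0)*S*e - e^2" unfolding kk by algebra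
  hence "kk*(S-kk) = S^2/5 + 2*lam*S*e - e^2" unfolding c0_facts lam_def by simp
  hence "kk*(S+1-kk) = S^2/5 + 2*lam*S*e - e^2 + kk" by (simp add: algebra_simps)
  thus ?thesis unfolding e_def[symmetric] by simp
qed

lemma sqrt_diff_le: fixes U W :: real assumes "U \<ge> 0" "W > 0"
  shows "\<bar>sqrt U - sqrt W\<bar> \<le> \<bar>U - W\<bar> / sqrt W"
proof -
  have "\<bar>U - W\<bar> = \<bar>sqrt U - sqrt W\<bar> * (sqrt U + sqrt W)"
  proof -
    have "U - W = (sqrt U - sqrt W) * (sqrt U + sqrt W)" using assms by (simp add: algebra_simps)
    thus ?thesis using assms by (simp add: abs_mult)
  qed
  moreover have "\<bar>sqrt U - sqrt W\<bar> * sqrt W \<le> \<bar>sqrt U - sqrt W\<bar> * (sqrt U + sqrt W)"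
    using assms by (intro mult_left_mono) auto
  ultimately have "\<bar>sqrt U - sqrt W\<bar> * sqrt W \<le> \<bar>U - W\<bar>" by simp
  thus ?thesis using assms by (simp add: field_simps)
qed




lemma sqrtG: fixes q gam :: real assumes "q \<ge> 0" "gam \<ge> 0"
  shows "sqrt (gam * (q^2)^3) = sqrt gam * q^3"
proof -
  have "(q^2)^3 = (q^3)^2" by (simp add: power_mult[symmetric] mult.commute)
  hence "sqrt (gam * (q^2)^3) = sqrt gam * sqrt ((q^3)^2)" by (simp only: real_sqrt_mult)
  also have "sqrt ((q^3)^2) = q^3" using assms by (simp only: real_sqrt_abs) simp
  finally show ?thesis .
qed

lemma inv_sqrt_diff:
  fixes W G :: real assumes "W > 0" "G > 0" "sqrt W \<ge> sqrt G / 2"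
  shows "\<bar>1 / sqrt W - 1 / sqrt G\<bar> \<le> 2 * \<bar>G - W\<bar> / (G * sqrt G)"
proof -
  have sW: "sqrt W > 0" "sqrt G > 0" using assms by auto
  have "1 / sqrt W - 1 / sqrt G = (sqrt G - sqrt W) / (sqrt W * sqrt G)" using sW by (simp add: field_simps)
  hence "\<bar>1 / sqrt W - 1 / sqrt G\<bar> = \<bar>sqrt G - sqrt W\<bar> / (sqrt W * sqrt G)" using sW by (simp add: abs_mult)
  also have "\<dots> \<le> (\<bar>G - W\<bar> / sqrt G) / (sqrt W * sqrt G)"
    using sqrt_diff_le[of W G] assms sW by (intro divide_right_mono) (auto simp: abs_minus_commute)
  also have "\<dots> \<le> (\<bar>G - W\<bar> / sqrt G) / ((sqrt G / 2) * sqrt G)"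
    using sW assms(3) by (intro divide_left_mono mult_right_mono mult_pos_pos) auto
  also have "\<dots> = 2 * \<bar>G - W\<bar> / (G * sqrt G)" using sW assms by (simp add: field_simps)
  finally show ?thesis .
qed

lemma t1_bound:
  fixes lam gam q e t G W :: real
  assumes q: "q \<ge> 1" and gam: "gam > 0" and lam: "lam > 0" and G: "G = gam * (q^2)^3"
    and W: "W > 0" "sqrt W \<ge> sqrt G / 2" and WG: "\<bar>G - W\<bar> \<le> (\<bar>e\<bar>+1) * (q^2)^2 / 3"
    and ee: "(\<bar>e\<bar>+1)^2 \<le> 2 * t^2 * q^2 + 8"
  shows "\<bar>lam * q^2 * e * (1 / sqrt W - 1 / sqrt G)\<bar> \<le> (16*lam/(3*gam * sqrt gam)) * ((1 + t^2)/q)"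
proof -
  have G0: "G > 0" using G gam q by simp
  have sG: "sqrt G = sqrt gam * q^3" using G sqrtG[of q gam] q gam by simp
  have "\<bar>lam * q^2 * e * (1 / sqrt W - 1 / sqrt G)\<bar> = lam * q^2 * \<bar>e\<bar> * \<bar>1 / sqrt W - 1 / sqrt G\<bar>"
    using lam by (simp add: abs_mult)
  also have "\<dots> \<le> lam * q^2 * \<bar>e\<bar> * (2 * \<bar>G - W\<bar> / (G * sqrt G))"
    using inv_sqrt_diff[OF W(1) G0 W(2)] lam by (intro mult_left_mono) auto
  also have "\<dots> \<le> lam * q^2 * \<bar>e\<bar> * (2 * ((\<bar>e\<bar>+1) * (q^2)^2 / 3) / (G * sqrt G))"
    using WG lam G0 by (intro mult_left_mono divide_right_mono) auto
  also have "\<dots> = (2*lam/(3*gam * sqrt gam)) * ((\<bar>e\<bar> * (\<bar>e\<bar>+1)) / q^3)"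
    unfolding sG using q gam by (simp add: G field_simps power2_eq_square power3_eq_cube)
  also have "\<dots> \<le> (2*lam/(3*gam * sqrt gam)) * ((2 * t^2 * q^2 + 8) / q^3)"
  proof -
    have "\<bar>e\<bar> * (\<bar>e\<bar>+1) \<le> (\<bar>e\<bar>+1) * (\<bar>e\<bar>+1)" by (intro mult_right_mono) auto
    hence "\<bar>e\<bar> * (\<bar>e\<bar>+1) \<le> (\<bar>e\<bar>+1)^2" by (simp add: power2_eq_square)
    hence "\<bar>e\<bar> * (\<bar>e\<bar>+1) \<le> 2 * t^2 * q^2 + 8" using ee by linarith
    thus ?thesis using lam gam q by (intro mult_left_mono divide_right_mono) auto
  qed
  also have "(2 * t^2 * q^2 + 8) / q^3 \<le> 8 * ((1 + t^2) / q)"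
  proof -
    have "(2 * t^2 * q^2 + 8) / q^3 = 2 * t^2 / q + 8 / q^3" using q by (simp add: field_simps power2_eq_square power3_eq_cube)
    have qq: "1 \<le> q * q" using mult_mono[of 1 q 1 q] q by simp
    have "q * 1 \<le> q * (q * q)" using qq q by (intro mult_left_mono) auto
    hence "q \<le> q^3" by (simp add: power3_eq_cube)
    hence "8 / q^3 \<le> 8 / q" using q by (intro divide_left_mono) auto
    hence "2 * t^2 / q + 8 / q^3 \<le> 2 * t^2 / q + 8 / q" by simp
    also have "\<dots> \<le> 8 * ((1 + t^2) / q)" using q by (simp add: field_simps)
    finally show ?thesis using \<open>(2 * t^2 * q^2 + 8) / q^3 = 2 * t^2 / q + 8 / q^3\<close> by simp
  qed
  hence "(2*lam/(3*gam * sqrt gam)) * ((2 * t^2 * q^2 + 8) / q^3) \<le> (2*lam/(3*gam * sqrt gam)) * (8 * ((1 + t^2) / q))"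
    using lam gam by (intro mult_left_mono) auto
  also have "\<dots> = (16*lam/(3*gam * sqrt gam)) * ((1 + t^2)/q)" by simp
  finally show ?thesis .
qed

definition Km :: real where
  "Km = 16 * lam / (3 * gam * sqrt gam) + lam / sqrt gam + 11 / sqrt gam + 16 / gam"
definition Cst :: real where "Cst = Km + 12 / gam"

lemma Km_pos: "Km \<ge> 0" unfolding Km_def using gam_pos lam_pos by simp

lemma gam_small: "gam \<le> 1/100" unfolding gam_def using sqrt5_bounds by simp

lemma t_ineq: fixes t :: real shows "\<bar>t\<bar> + 2 \<le> 3 * (1 + t^2)" and t_ineq2: "(\<bar>t\<bar> + 2)^2 \<le> 8 * (1 + t^2)"
proof -
  have "0 \<le> (\<bar>t\<bar> - 1/2)^2" by simp
  hence "\<bar>t\<bar> \<le> 1 + t^2" by (simp add: power2_eq_square algebra_simps abs_mult_self_eq)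
  moreover have "3 * (1 + t^2) = 3 + 3 * t^2" by simp
  ultimately show "\<bar>t\<bar> + 2 \<le> 3 * (1 + t^2)" using zero_le_power2[of t] by linarith
  have "0 \<le> (\<bar>t\<bar> - 2)^2" by simp
  hence h: "4 * \<bar>t\<bar> \<le> t^2 + 4" by (simp add: power2_eq_square algebra_simps abs_mult_self_eq)
  have "(\<bar>t\<bar> + 2)^2 = t^2 + 4 * \<bar>t\<bar> + 4" by (simp add: power2_eq_square algebra_simps abs_mult_self_eq)
  moreover have "8 * (1 + t^2) = 8 + 8 * t^2" by simp
  ultimately show "(\<bar>t\<bar> + 2)^2 \<le> 8 * (1 + t^2)" using h zero_le_power2[of t] by linarith
qed

lemma abs1: fixes u v :: real shows "0 \<le> u \<and> u \<le> 1 \<Longrightarrow> 0 \<le> v \<and> v \<le> 1 \<Longrightarrow> \<bar>u - v\<bar> \<le> 1"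
  by (simp add: abs_le_iff)

lemma main_est:
  fixes S kk K0 x mu V :: real
  assumes S: "S \<ge> 1" and k: "0 < kk" "kk < S/2"
    and K0: "K0 \<le> c0*S" "c0*S < K0 + 1"
    and mu: "\<bar>mu - S^2/10\<bar> \<le> S" and V: "\<bar>V - vv*S^3\<bar> \<le> 2*S^2"
  shows "\<bar>Phi (((mu - kk*(S+1-kk)/2) + x* sqrt V)/sqrt (kk*(S+1-kk)*(S-2*kk)/12))
          - Phi (sqrt (8/5)*x + (- sqrt (3/5)) * (5 powr (3/4) * (kk - K0)/sqrt S))\<bar>
        \<le> Cst / sqrt S * (1 + (5 powr (3/4) * (kk - K0)/sqrt S)^2)"
proof -
  define q where "q = sqrt S"
  have q1: "q \<ge> 1" unfolding q_def using S by simp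
  have Sq: "S = q^2" unfolding q_def using S by simp
  define d where "d = kk - K0"
  define t where "t = 5 powr (3/4) * d / q"
  define e where "e = kk - c0*S"
  define T where "T = (1 + t^2)/q"
  define eps where "eps = (\<bar>t\<bar> + 2)/q"
  have T0: "T \<ge> 0" unfolding T_def using q1 by simp
  have rhs: "Cst / sqrt S * (1 + (5 powr (3/4) * (kk - K0)/sqrt S)^2) = Cst * T"
    unfolding T_def t_def d_def q_def by simp
  have invq: "1/q \<le> T" unfolding T_def using q1 by (intro divide_right_mono) auto
  have epsT: "eps \<le> 3 * T" unfolding eps_def T_def using t_ineq[of t] q1 by (simp add: divide_right_mono)
  have Cst: "Cst = Km + 12/gam" unfolding Cst_def ..
  note gp = gam_pos and lp = lam_pos
  show ?thesis
  proof (cases "eps > gam/4")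
    case True
    have "\<bar>Phi (((mu - kk*(S+1-kk)/2) + x* sqrt V)/sqrt (kk*(S+1-kk)*(S-2*kk)/12))
          - Phi (sqrt (8/5)*x + (- sqrt (3/5)) * (5 powr (3/4) * (kk - K0)/sqrt S))\<bar> \<le> 1"
      by (rule abs1) (rule Phi_01)+
    also have "1 \<le> (12/gam) * T"
    proof -
      have "(12/gam) * (gam/4) \<le> (12/gam) * (3 * T)" using True epsT gp by (intro mult_left_mono) auto
      thus ?thesis using gp by (simp add: field_simps)
    qed
    also have "\<dots> \<le> Cst * T" unfolding Cst using Km_pos T0 by (simp add: distrib_right)
    finally show ?thesis unfolding rhs .
  next
    case False
    hence eps_le: "eps \<le> gam/4" by simp
    have eps1: "eps \<le> 1/400" using eps_le gam_small by simp
    have p1: "5 powr (3/4) \<ge> (1::real)" by (simp add: ge_one_powr_ge_zero)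
    have d_eq: "d = t * q / 5 powr (3/4)" unfolding t_def using q1 by simp
    have d_bnd: "\<bar>d\<bar> \<le> \<bar>t\<bar> * q"
    proof -
      have "\<bar>d\<bar> = \<bar>t\<bar> * q / 5 powr (3/4)" unfolding d_eq using q1 by (simp add: abs_mult)
      also have "\<dots> \<le> \<bar>t\<bar> * q"
      proof -
        have "\<bar>t\<bar> * q * 1 \<le> \<bar>t\<bar> * q * 5 powr (3/4)" using p1 q1 by (intro mult_left_mono) auto
        thus ?thesis using p1 by (simp add: divide_le_eq)
      qed
      finally show ?thesis .
    qed
    have ed: "\<bar>e - d\<bar> \<le> 1" unfolding e_def d_def using K0 by simp
    have epsS: "eps * S = (\<bar>t\<bar> + 2) * q" unfolding eps_def Sq using q1 by (simp add: power2_eq_square)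
    have e1: "\<bar>e\<bar> + 1 \<le> eps * S"
    proof -
      have "\<bar>e\<bar> + 1 \<le> \<bar>t\<bar> * q + 2" using ed d_bnd by linarith
      also have "\<dots> \<le> (\<bar>t\<bar> + 2) * q" using q1 by (simp add: algebra_simps)
      finally show ?thesis unfolding epsS .
    qed
    have e2: "(\<bar>e\<bar> + 1)^2 \<le> 2 * t^2 * q^2 + 8"
    proof -
      have "\<bar>e\<bar> + 1 \<le> \<bar>t\<bar> * q + 2" using ed d_bnd by linarith
      hence "(\<bar>e\<bar> + 1)^2 \<le> (\<bar>t\<bar> * q + 2)^2" by (intro power_mono) auto
      also have "\<dots> \<le> 2 * t^2 * q^2 + 8"
      proof -
        have "0 \<le> (\<bar>t\<bar> * q - 2)^2" by simp
        thus ?thesis by (simp add: power2_eq_square algebra_simps abs_mult_self_eq)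
      qed
      finally show ?thesis .
    qed
    have "eps * S \<le> 1 * S" using eps1 S by (intro mult_right_mono) auto
    hence eS: "\<bar>e\<bar> \<le> S" using e1 by linarith
    define W where "W = kk*(S+1-kk)*(S-2*kk)/12"
    define G where "G = gam * S^3"
    define U where "U = V * (5/8)"
    have G0: "G > 0" unfolding G_def using gp S by simp
    have WG: "\<bar>W - G\<bar> \<le> (\<bar>e\<bar> + 1) * S^2 / 3"
      unfolding W_def G_def e_def using W_close[of S kk] S k eS unfolding e_def by simp
    have S3: "eps * S^3 = (eps * S) * S^2" by (simp add: power2_eq_square power3_eq_cube)
    have WG2: "\<bar>W - G\<bar> \<le> eps * S^3 / 3"
    proof -
      have "(\<bar>e\<bar> + 1) * S^2 \<le> (eps * S) * S^2" using e1 by (intro mult_right_mono) auto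
      thus ?thesis using WG S3 by linarith
    qed
    have UG: "\<bar>U - G\<bar> \<le> 5/8 * eps * S^3"
    proof -
      have "U - G = 5/8 * (V - vv*S^3)" unfolding U_def G_def vv_gam[symmetric] by (simp add: algebra_simps)
      hence "\<bar>U - G\<bar> = \<bar>5/8 * (V - vv*S^3)\<bar>" by (rule arg_cong)
      hence "\<bar>U - G\<bar> = 5/8 * \<bar>V - vv*S^3\<bar>" by (simp only: abs_mult)
      also have "5/8 * \<bar>V - vv*S^3\<bar> \<le> 5/8 * (2 * S^2)" using V by (intro mult_left_mono) auto
      also have "\<dots> \<le> 5/8 * ((eps * S) * S^2)"
      proof -
        have "2 * 1 \<le> 2 * q" using q1 by simp
        moreover have "0 \<le> \<bar>t\<bar> * q" using q1 by simp
        moreover have "(\<bar>t\<bar> + 2) * q = \<bar>t\<bar> * q + 2 * q" by (simp add: algebra_simps)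
        ultimately have "2 \<le> eps * S" unfolding epsS by linarith
        hence "2 * S^2 \<le> (eps * S) * S^2" by (intro mult_right_mono) auto
        thus ?thesis by (simp add: mult_ac)
      qed
      finally have "\<bar>U - G\<bar> \<le> 5/8 * ((eps * S) * S^2)" .
      thus ?thesis by (simp add: mult.assoc power2_eq_square power3_eq_cube)
    qed
    have Wge: "W \<ge> G / 2"
    proof -
      have "eps * S^3 / 3 \<le> (gam/4) * S^3 / 3" using eps_le S by (intro divide_right_mono mult_right_mono) auto
      moreover have "gam * S^3 = G" unfolding G_def ..
      moreover have "- (W - G) \<le> eps * S^3 / 3" using WG2 by (rule abs_le_D2)
      ultimately show ?thesis using G0 by linarith
    qed
    have Uge: "U \<ge> G / 2"
    proof -
      have "5/8 * eps * S^3 \<le> 5/8 * (gam/4) * S^3" using eps_le S by (intro mult_right_mono) auto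
      moreover have "gam * S^3 = G" unfolding G_def ..
      moreover have "- (U - G) \<le> 5/8 * eps * S^3" using UG by (rule abs_le_D2)
      ultimately show ?thesis using G0 by linarith
    qed
    have W0: "W > 0" using Wge G0 by simp
    have U0: "U > 0" using Uge G0 by simp
    have V0: "V > 0" using U0 unfolding U_def by simp
    define A where "A = sqrt V / sqrt W"
    define B where "B = (mu - kk*(S+1-kk)/2) / sqrt W"
    define a where "a = sqrt (8/5::real)"
    define \<beta> where "\<beta> = - sqrt (3/5) * t"
    have A0: "A > 0" unfolding A_def using V0 W0 by simp
    have a0: "a > 0" unfolding a_def by simp
    have yk: "((mu - kk*(S+1-kk)/2) + x* sqrt V)/sqrt W = A*x + B"
      unfolding A_def B_def using W0 by (simp add: field_simps)
    have ys: "sqrt (8/5)*x + (- sqrt (3/5)) * (5 powr (3/4) * (kk - K0)/sqrt S) = a*x + \<beta>"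
      unfolding a_def \<beta>_def t_def d_def q_def by simp
    have r_eq: "A / a = sqrt U / sqrt W"
    proof -
      have "sqrt V / sqrt (8/5) = sqrt U" unfolding U_def by (simp add: real_sqrt_divide[symmetric] field_simps)
      thus ?thesis unfolding A_def a_def by (simp add: field_simps)
    qed
    define r where "r = A / a"
    have r1: "\<bar>r - 1\<bar> \<le> 2 * eps / gam"
    proof -
      have sW: "sqrt W > 0" using W0 by simp
      have "r - 1 = (sqrt U - sqrt W) / sqrt W" unfolding r_def r_eq using sW by (simp add: field_simps)
      hence "\<bar>r - 1\<bar> = \<bar>sqrt U - sqrt W\<bar> / sqrt W" using sW by simp
      also have "\<dots> \<le> (\<bar>U - W\<bar> / sqrt W) / sqrt W"
        using sqrt_diff_le[of U W] U0 W0 sW by (intro divide_right_mono) auto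
      also have "\<dots> = \<bar>U - W\<bar> / W" using W0 by (simp add: field_simps)
      also have "\<dots> \<le> (eps * S^3) / (G / 2)"
      proof -
        have "\<bar>U - W\<bar> \<le> \<bar>U - G\<bar> + \<bar>W - G\<bar>" by linarith
        also have "\<dots> \<le> eps * S^3"
        proof -
          have "0 \<le> eps * S^3" unfolding eps_def using q1 S by simp
          thus ?thesis using UG WG2 by linarith
        qed
        finally show ?thesis using Wge G0 W0 by (intro frac_le) auto
      qed
      also have "\<dots> = 2 * eps / gam" unfolding G_def using gp S by (simp add: field_simps)
      finally show ?thesis .
    qed
    have "2 * eps / gam \<le> 1/2" using eps_le gp by (simp add: field_simps)
    hence rhalf: "\<bar>r - 1\<bar> \<le> 1/2" using r1 by linarith
    have rpos: "r \<ge> 1/2" using abs_le_D2[OF rhalf] by linarith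
    have minr: "\<bar>r - 1\<bar> / min r 1 \<le> 2 * \<bar>r - 1\<bar>"
    proof -
      have "min r 1 \<ge> 1/2" using rpos by simp
      hence "\<bar>r - 1\<bar> / min r 1 \<le> \<bar>r - 1\<bar> / (1/2)" by (intro divide_left_mono) auto
      thus ?thesis by simp
    qed
    have betab: "\<bar>\<beta>\<bar> \<le> \<bar>t\<bar>"
    proof -
      have "sqrt (3/5::real) \<le> 1" by simp
      thus ?thesis unfolding \<beta>_def by (simp add: abs_mult mult_left_le_one_le)
    qed
    have P1: "\<bar>r - 1\<bar> * \<bar>\<beta>\<bar> + \<bar>r - 1\<bar> / min r 1 \<le> (16/gam) * T"
    proof -
      have "\<bar>r - 1\<bar> * \<bar>\<beta>\<bar> + \<bar>r - 1\<bar> / min r 1 \<le> \<bar>r - 1\<bar> * (\<bar>t\<bar> + 2)"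
      proof -
        have "\<bar>r - 1\<bar> * \<bar>\<beta>\<bar> \<le> \<bar>r - 1\<bar> * \<bar>t\<bar>" using betab by (intro mult_left_mono) auto
        thus ?thesis using minr by (simp add: algebra_simps)
      qed
      also have "\<dots> \<le> (2 * eps / gam) * (\<bar>t\<bar> + 2)" using r1 by (intro mult_right_mono) auto
      also have "\<dots> = (2/gam) * ((\<bar>t\<bar> + 2)^2 / q)" unfolding eps_def power2_eq_square
        by (simp only: times_divide_eq_left times_divide_eq_right divide_divide_eq_left mult_ac)
      also have "\<dots> \<le> (2/gam) * (8 * (1 + t^2) / q)"
        using t_ineq2[of t] gp q1 by (intro mult_left_mono divide_right_mono) auto
      also have "\<dots> = (16/gam) * T" unfolding T_def by simp
      finally show ?thesis .
    qed
    have sG: "sqrt G = sqrt gam * q^3" unfolding G_def Sq using sqrtG[of q gam] q1 gp by simp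
    have sG0: "sqrt G > 0" using G0 by simp
    have sWG: "sqrt W \<ge> sqrt G / 2"
    proof -
      have "(sqrt G / 2)^2 \<le> W" using Wge G0 by (simp add: power_divide)
      thus ?thesis by (rule real_le_rsqrt)
    qed
    have sW0: "sqrt W > 0" using W0 by simp
    define R1 where "R1 = e^2/2 + (mu - S^2/10) - kk/2"
    have ms: "mu - kk*(S+1-kk)/2 = -(lam*S*e) + R1"
      unfolding R1_def e_def using mean_split[of kk S] by linarith
    have R1b: "\<bar>R1\<bar> \<le> e^2/2 + 3*S/2"
    proof -
      have a: "\<bar>-(kk/2)\<bar> \<le> S/2" using k by simp
      have b: "\<bar>e^2/2\<bar> \<le> e^2/2" by simp
      have "\<bar>e^2/2 + (mu - S^2/10) + -(kk/2)\<bar> \<le> e^2/2 + S + S/2"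
        by (rule order_trans[OF abs_triangle_ineq add_mono[OF order_trans[OF abs_triangle_ineq add_mono[OF b mu]] a]])
      thus ?thesis unfolding R1_def by simp
    qed
    have th: "sqrt (3/5) * 5 powr (3/4) = lam / sqrt gam" by (rule theta)
    have beta_eq: "\<beta> = -(lam*S*d/sqrt G)"
    proof -
      have "\<beta> = -(sqrt (3/5) * 5 powr (3/4) * d / q)" unfolding \<beta>_def t_def by simp
      also have "\<dots> = -((lam / sqrt gam) * d / q)" unfolding th ..
      also have "\<dots> = -(lam*S*d/sqrt G)" unfolding sG Sq using q1 gp
        by (simp add: field_simps power2_eq_square power3_eq_cube)
      finally show ?thesis .
    qed
    have Bb: "B - \<beta> = -(lam*S*e*(1/sqrt W - 1/sqrt G)) + (-(lam*S*(e-d)/sqrt G)) + R1/sqrt W"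
      unfolding B_def ms beta_eq using sW0 sG0 by (simp add: field_simps)
    have t1: "\<bar>lam*S*e*(1/sqrt W - 1/sqrt G)\<bar> \<le> (16*lam/(3*gam * sqrt gam)) * T"
    proof -
      have "\<bar>lam * q^2 * e * (1 / sqrt W - 1 / sqrt G)\<bar> \<le> (16*lam/(3*gam * sqrt gam)) * ((1 + t^2)/q)"
        by (rule t1_bound[OF q1 gp lp _ W0 sWG]) (use WG e2 in \<open>simp_all add: G_def Sq abs_minus_commute\<close>)
      thus ?thesis unfolding T_def Sq .
    qed
    have t2: "\<bar>-(lam*S*(e-d)/sqrt G)\<bar> \<le> (lam / sqrt gam) * T"
    proof -
      have "\<bar>-(lam*S*(e-d)/sqrt G)\<bar> = lam*S*\<bar>e-d\<bar>/sqrt G"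
        using lp S sG0 by (simp add: abs_mult)
      also have "\<dots> = lam * \<bar>e - d\<bar> / (sqrt gam * q)"
        unfolding sG Sq using q1 gp lp by (simp add: power2_eq_square power3_eq_cube field_simps)
      also have "\<dots> \<le> lam * 1 / (sqrt gam * q)" using ed lp gp q1
        by (intro divide_right_mono mult_left_mono) auto
      also have "\<dots> = (lam / sqrt gam) * (1/q)" by simp
      also have "\<dots> \<le> (lam / sqrt gam) * T" using invq lp gp by (intro mult_left_mono) auto
      finally show ?thesis .
    qed
    have t3: "\<bar>R1/sqrt W\<bar> \<le> (11 / sqrt gam) * T"
    proof -
      have "\<bar>R1/sqrt W\<bar> = \<bar>R1\<bar> / sqrt W" using sW0 by simp
      also have "\<dots> \<le> (e^2/2 + 3*S/2) / (sqrt G / 2)"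
        using R1b sWG sG0 by (intro frac_le) auto
      also have "\<dots> = (e^2 + 3*q^2) / (sqrt gam * q^3)" unfolding sG Sq using gp q1 by (simp add: field_simps)
      also have "\<dots> \<le> (2 * t^2 * q^2 + 8 + 3*q^2) / (sqrt gam * q^3)"
      proof -
        have "\<bar>e\<bar>^2 \<le> (\<bar>e\<bar> + 1)^2" by (rule power_mono) auto
        hence "e^2 \<le> (\<bar>e\<bar> + 1)^2" by simp
        hence "e^2 \<le> 2 * t^2 * q^2 + 8" using e2 by linarith
        thus ?thesis using gp q1 by (intro divide_right_mono) auto
      qed
      also have "\<dots> \<le> (11 / sqrt gam) * T"
      proof -
        have qq: "1 \<le> q * q" using mult_mono[of 1 q 1 q] q1 by simp
        have "q * 1 \<le> q * (q * q)" using qq q1 by (intro mult_left_mono) auto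
        hence q3: "q \<le> q^3" by (simp add: power3_eq_cube)
        have "2 * t^2 * q^2 + 8 + 3*q^2 \<le> 2 * t^2 * q^2 + 11 * q^2" using qq by (simp add: power2_eq_square)
        also have "\<dots> \<le> 11 * (1 + t^2) * q^2" by (simp add: algebra_simps)
        finally have "2 * t^2 * q^2 + 8 + 3*q^2 \<le> 11 * (1 + t^2) * q^2" .
        hence "(2 * t^2 * q^2 + 8 + 3*q^2) / (sqrt gam * q^3) \<le> 11 * (1 + t^2) * q^2 / (sqrt gam * q^3)"
          using gp q1 by (intro divide_right_mono) auto
        also have "\<dots> = (11 / sqrt gam) * T" unfolding T_def using q1 gp
          by (simp add: field_simps power2_eq_square power3_eq_cube)
        finally show ?thesis .
      qed
      finally show ?thesis .
    qed
    have P2: "\<bar>B - \<beta>\<bar> \<le> (16*lam/(3*gam * sqrt gam) + lam / sqrt gam + 11 / sqrt gam) * T"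
    proof -
      have "\<bar>B - \<beta>\<bar> \<le> \<bar>-(lam*S*e*(1/sqrt W - 1/sqrt G))\<bar> + \<bar>-(lam*S*(e-d)/sqrt G)\<bar> + \<bar>R1/sqrt W\<bar>"
        unfolding Bb by (rule order_trans[OF abs_triangle_ineq add_right_mono[OF abs_triangle_ineq]])
      thus ?thesis using t1 t2 t3 by (simp add: distrib_right)
    qed
    have main: "\<bar>Phi (A * x + B) - Phi (a * x + \<beta>)\<bar> \<le> \<bar>B - \<beta>\<bar> + \<bar>r - 1\<bar> * \<bar>\<beta>\<bar> + \<bar>r - 1\<bar> / min r 1"
      unfolding r_def by (rule Phi_compare[OF A0 a0])
    have "\<bar>Phi (A * x + B) - Phi (a * x + \<beta>)\<bar> \<le> Km * T"
      using main P1 P2 unfolding Km_def by (simp add: distrib_right)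
    also have "\<dots> \<le> Cst * T" unfolding Cst using gp T0 by (simp add: distrib_right)
    finally have X: "\<bar>Phi (A * x + B) - Phi (a * x + \<beta>)\<bar> \<le> Cst * T" .
    show ?thesis unfolding rhs W_def[symmetric] yk ys using X .
  qed
qed



theorem corollary5:
  shows "\<exists>C::real. \<forall>s::nat. \<forall>k::nat. \<forall>x::real.
           0 < s \<longrightarrow> 0 < k \<longrightarrow> real k < real s / 2 \<longrightarrow>
           \<bar>Phi (y_k s k x) - Phi (y_k_star s k x)\<bar> \<le> C / sqrt (real s) * (1 + (t_k s k)\<^sup>2)"
proof (intro exI[of _ Cst] allI impI)
  fix s k :: nat and x :: real
  assume s: "0 < s" and k: "0 < k" and ks: "real k < real s / 2"
  have S1: "real s \<ge> 1" using s by simp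
  have fl: "real_of_int (k0 s) \<le> c0 * real s" "c0 * real s < real_of_int (k0 s) + 1"
    unfolding k0_def by linarith+
  have "\<bar>Phi (((core_mean s - real k*(real s+1-real k)/2) + x * sqrt (core_var s))
            / sqrt (real k*(real s+1-real k)*(real s-2*real k)/12))
          - Phi (sqrt (8/5)*x + (- sqrt (3/5)) * (5 powr (3/4) * (real k - real_of_int (k0 s))/sqrt (real s)))\<bar>
        \<le> Cst / sqrt (real s) * (1 + (5 powr (3/4) * (real k - real_of_int (k0 s))/sqrt (real s))^2)"
    by (rule main_est[OF S1 _ ks fl mean_bound var_bound]) (use s k in auto)
  thus "\<bar>Phi (y_k s k x) - Phi (y_k_star s k x)\<bar> \<le> Cst / sqrt (real s) * (1 + (t_k s k)\<^sup>2)"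
    unfolding y_k_def y_k_star_def t_k_def mu_k_def sigma_k_def .
qed

end
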